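(* Let $r\ge1$. There exists a constant $C_r$ such that the following holds. Let $n\ge 3r$, $\lambda\vdash n$ with $n-\lambda_1=r$, and $\sigma\in\mathfrak{S}_n$ with $f:=f_1(\sigma)\ge 2r$; let $\alpha$ be the cycle lengths of $\sigma$ listed in weakly increasing order. Let $\mu\vdash f$ with $\mu\subset\lambda$, let $K=|\lambda^*\setminus\mu^*|$ and assume $K\ge2$. Let $s=(s_i)_{i\ge2}$ be nonnegative integers with $\sum_{i\ge2} i s_i=K$. Let $S(\lambda,\alpha,\mu,s)$ be the set of ribbon tableaux of shape $\lambda$ and weight $\alpha$ in which the ribbons of length $1$ fill exactly the cells of $\mu$, and the cells of $\lambda^*\setminus\mu^*$ are covered by exactly $s_i$ ribbons of length $i$ for each $i\ge2$. Then $$|S(\lambda,\alpha,\mu,s)|\le C_r\, f^{r-K}\,G(\sigma)^K\le C_r\,M(\sigma)^r.$$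
   Context: A ribbon (rim hook) is a connected skew Young diagram containing no $2\times2$ square; its height is its number of rows minus one. A ribbon tableau of shape $\lambda\vdash n$ and weight $\alpha=(\alpha_1,\dots,\alpha_p)$ (a sequence of positive integers summing to $n$) is a chain of Young diagrams $\emptyset=\lambda^{(0)}\subset\lambda^{(1)}\subset\cdots\subset\lambda^{(p)}=\lambda$ such that each $\lambda^{(i)}\setminus\lambda^{(i-1)}$ is a ribbon with $\alpha_i$ cells; its height is the sum of the heights of its ribbons. $\lambda_1$ is the first row length of $\lambda$ and $\lambda^*=(\lambda_2,\lambda_3,\dots)$; for $\mu\subset\lambda$, $\lambda^*\setminus\mu^*$ is the set of cells of $\lambda\setminus\mu$ not in the first row. $f_i(\sigma)$ is the number of $i$-cycles of $\sigma$, $M(\sigma)=\max_{i\ge1}f_i(\sigma)^{1/i}$ and $G(\sigma)=\max_{i\ge2}f_i(\sigma)^{1/i}$. *)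

theory Defs
  imports Complex_Main "HOL-Library.Multiset" "HOL-Combinatorics.Permutations"
begin

text \<open>Partitions are lists of positive naturals, weakly decreasing.
 Cells are (row, column), 0-indexed; row 0 is the first row.\<close>

definition is_partition :: "nat list \<Rightarrow> bool" where
  "is_partition lam \<longleftrightarrow> sorted_wrt (\<ge>) lam \<and> (\<forall>x\<in>set lam. 0 < x)"

definition partition_of :: "nat list \<Rightarrow> nat \<Rightarrow> bool" where
  "partition_of lam n \<longleftrightarrow> is_partition lam \<and> sum_list lam = n"

definition diag :: "nat list \<Rightarrow> (nat \<times> nat) set" where
  "diag lam = {(i, j). i < length lam \<and> j < lam ! i}"

definition first_row :: "nat list \<Rightarrow> nat" where
  "first_row lam = (if lam = [] then 0 else hd lam)"

definition cell_adj :: "nat \<times> nat \<Rightarrow> nat \<times> nat \<Rightarrow> bool" where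
  "cell_adj a b \<longleftrightarrow>
     (fst a = fst b \<and> (snd b = Suc (snd a) \<or> snd a = Suc (snd b))) \<or>
     (snd a = snd b \<and> (fst b = Suc (fst a) \<or> fst a = Suc (fst b)))"

definition cells_connected :: "(nat \<times> nat) set \<Rightarrow> bool" where
  "cells_connected R \<longleftrightarrow> R \<noteq> {} \<and>
     (\<forall>a\<in>R. \<forall>b\<in>R. (\<lambda>x y. x \<in> R \<and> y \<in> R \<and> cell_adj x y)\<^sup>*\<^sup>* a b)"

definition no_square :: "(nat \<times> nat) set \<Rightarrow> bool" where
  "no_square R \<longleftrightarrow> \<not> (\<exists>i j. (i, j) \<in> R \<and> (Suc i, j) \<in> R \<and> (i, Suc j) \<in> R \<and> (Suc i, Suc j) \<in> R)"

text \<open>A ribbon: connected skew shape with no 2x2 square (skewness comes from the chain).\<close>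
definition ribbon :: "(nat \<times> nat) set \<Rightarrow> bool" where
  "ribbon R \<longleftrightarrow> cells_connected R \<and> no_square R"

definition ribbon_tableau :: "nat list \<Rightarrow> nat list \<Rightarrow> nat list list \<Rightarrow> bool" where
  "ribbon_tableau lam alpha T \<longleftrightarrow>
     length T = Suc (length alpha) \<and> T ! 0 = [] \<and> T ! length alpha = lam \<and>
     (\<forall>k\<le>length alpha. is_partition (T ! k)) \<and>
     (\<forall>k<length alpha. diag (T ! k) \<subseteq> diag (T ! Suc k) \<and>
        ribbon (diag (T ! Suc k) - diag (T ! k)) \<and>
        card (diag (T ! Suc k) - diag (T ! k)) = alpha ! k)"

definition rib :: "nat list list \<Rightarrow> nat \<Rightarrow> (nat \<times> nat) set" where
  "rib T k = diag (T ! Suc k) - diag (T ! k)"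

text \<open>Cells of lambda* \ mu*: cells of lambda \ mu not in the first row.\<close>
definition lower_skew :: "nat list \<Rightarrow> nat list \<Rightarrow> (nat \<times> nat) set" where
  "lower_skew lam mu = {c \<in> diag lam - diag mu. 1 \<le> fst c}"

definition S_set :: "nat list \<Rightarrow> nat list \<Rightarrow> nat list \<Rightarrow> (nat \<Rightarrow> nat) \<Rightarrow> nat list list set" where
  "S_set lam alpha mu s = {T. ribbon_tableau lam alpha T \<and>
     \<Union>{rib T k | k. k < length alpha \<and> alpha ! k = 1} = diag mu \<and>
     (\<forall>k<length alpha. rib T k \<inter> lower_skew lam mu \<noteq> {} \<longrightarrow> rib T k \<subseteq> lower_skew lam mu) \<and>
     (\<forall>i\<ge>2. card {k. k < length alpha \<and> alpha ! k = i \<and> rib T k \<inter> lower_skew lam mu \<noteq> {}} = s i)}"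

definition orb :: "(nat \<Rightarrow> nat) \<Rightarrow> nat \<Rightarrow> nat set" where
  "orb \<sigma> x = {(\<sigma> ^^ k) x | k. True}"

definition cycles_of :: "(nat \<Rightarrow> nat) \<Rightarrow> nat \<Rightarrow> nat set set" where
  "cycles_of \<sigma> n = {orb \<sigma> x | x. x < n}"

definition fcyc :: "(nat \<Rightarrow> nat) \<Rightarrow> nat \<Rightarrow> nat \<Rightarrow> nat" where
  "fcyc \<sigma> n i = card {c \<in> cycles_of \<sigma> n. card c = i}"

definition cycle_type :: "(nat \<Rightarrow> nat) \<Rightarrow> nat \<Rightarrow> nat list" where
  "cycle_type \<sigma> n = sorted_list_of_multiset (image_mset card (mset_set (cycles_of \<sigma> n)))"

definition Mfun :: "(nat \<Rightarrow> nat) \<Rightarrow> nat \<Rightarrow> real" where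
  "Mfun \<sigma> n = (SUP i\<in>{1..}. real (fcyc \<sigma> n i) powr (1 / real i))"

definition Gfun :: "(nat \<Rightarrow> nat) \<Rightarrow> nat \<Rightarrow> real" where
  "Gfun \<sigma> n = (SUP i\<in>{2..}. real (fcyc \<sigma> n i) powr (1 / real i))"

end

theory Submission
  imports Defs "HOL-Library.FuncSet"
begin

lemma diag_Nil[simp]: "diag [] = {}" by (simp add: diag_def)

lemma diag_Cons: "diag (x # xs) = {(0, j) | j. j < x} \<union> (\<lambda>(i, j). (Suc i, j)) ` diag xs"
proof (intro set_eqI iffI)
  fix c assume "c \<in> diag (x # xs)"
  then obtain i j where c: "c = (i, j)" "i < Suc (length xs)" "j < (x # xs) ! i" by (auto simp: diag_def)
  show "c \<in> {(0, j) | j. j < x} \<union> (\<lambda>(i, j). (Suc i, j)) ` diag xs"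
  proof (cases i)
    case 0 then show ?thesis using c by auto
  next
    case (Suc i') then show ?thesis using c by (force simp: diag_def)
  qed
next
  fix c assume "c \<in> {(0, j) | j. j < x} \<union> (\<lambda>(i, j). (Suc i, j)) ` diag xs"
  then show "c \<in> diag (x # xs)" by (auto simp: diag_def)
qed


lemma finite_diag[simp]: "finite (diag P)"
  by (induction P) (auto simp: diag_Cons)

lemma card_diag: "card (diag P) = sum_list P"
proof (induction P)
  case Nil then show ?case by simp
next
  case (Cons x xs)
  have inj: "inj (\<lambda>(i::nat, j::nat). (Suc i, j))" by (auto simp: inj_def)
  have e: "{(0::nat, j) | j. j < x} = (\<lambda>j. (0, j)) ` {..<x}" by auto
  have "card (diag (x # xs)) = card {(0::nat, j) | j. j < x} + card ((\<lambda>(i, j). (Suc i, j)) ` diag xs)"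
    unfolding diag_Cons by (rule card_Un_disjoint) (auto simp: e)
  also have "\<dots> = x + sum_list xs"
    using Cons by (simp add: e card_image inj_on_def card_image[OF inj_on_subset[OF inj]])
  finally show ?case by simp
qed

definition R1 :: "(nat \<times> nat) set" where "R1 = {c. 1 \<le> fst c}"

lemma diag_R1: "diag P \<inter> R1 = (\<lambda>(i, j). (Suc i, j)) ` diag (tl P)"
  by (cases P) (auto simp: diag_Cons R1_def)

lemma card_diag_R1: "card (diag P \<inter> R1) = sum_list (tl P)"
proof -
  have inj: "inj (\<lambda>(i::nat, j::nat). (Suc i, j))" by (auto simp: inj_def)
  show ?thesis unfolding diag_R1 by (simp add: card_image[OF inj_on_subset[OF inj]] card_diag)
qed

lemma mem_diag: "(i, j) \<in> diag P \<longleftrightarrow> i < length P \<and> j < P ! i"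
  by (simp add: diag_def)

lemma diag_inj:
  assumes "\<forall>x\<in>set L. 0 < x" "\<forall>x\<in>set L'. 0 < x" "diag L = diag L'"
  shows "L = L'"
proof -
  have len: "i < length L \<longleftrightarrow> i < length L'" for i
  proof -
    have "i < length L \<longleftrightarrow> (i, 0) \<in> diag L" using assms(1) by (auto simp: mem_diag)
    also have "\<dots> \<longleftrightarrow> (i, 0) \<in> diag L'" using assms(3) by simp
    also have "\<dots> \<longleftrightarrow> i < length L'" using assms(2) by (auto simp: mem_diag)
    finally show ?thesis .
  qed
  then have l: "length L = length L'" by (meson linorder_neqE_nat less_irrefl)
  show ?thesis
  proof (rule nth_equalityI[OF l])
    fix i assume i: "i < length L"
    have "j < L ! i \<longleftrightarrow> j < L' ! i" for j
      using assms(3) i l by (metis mem_diag)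
    then show "L ! i = L' ! i" by (meson linorder_neqE_nat less_irrefl)
  qed
qed

lemma tl_eq_of_diag:
  assumes "is_partition P" "is_partition P'" "diag P \<inter> R1 = diag P' \<inter> R1"
  shows "tl P = tl P'"
proof -
  have inj: "inj (\<lambda>(i::nat, j::nat). (Suc i, j))" by (auto simp: inj_def)
  have "diag (tl P) = diag (tl P')" using assms(3) unfolding diag_R1 using inj by (simp add: inj_image_eq_iff)
  moreover have "\<forall>x\<in>set (tl P). 0 < x" "\<forall>x\<in>set (tl P'). 0 < x"
    using assms(1,2) unfolding is_partition_def by (metis list.sel(2) list.set_sel(2))+
  ultimately show ?thesis using diag_inj by blast
qed

lemma eq_of_tl_sum:
  fixes P P' :: "nat list"
  assumes "\<forall>x\<in>set P. 0 < x" "\<forall>x\<in>set P'. 0 < x" "tl P = tl P'" "sum_list P = sum_list P'"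
  shows "P = P'"
  using assms by (cases P; cases P') auto

lemma length_le_sum_list: "\<forall>x\<in>set xs. 0 < (x::nat) \<Longrightarrow> length xs \<le> sum_list xs"
  by (induction xs) auto


lemma rt_mono:
  assumes "ribbon_tableau lam alpha T" "a \<le> b" "b \<le> length alpha"
  shows "diag (T ! a) \<subseteq> diag (T ! b)"
  using assms(2,3)
proof (induction b)
  case 0 then show ?case by simp
next
  case (Suc b)
  show ?case
  proof (cases "a = Suc b")
    case True then show ?thesis by simp
  next
    case False
    then have "diag (T ! a) \<subseteq> diag (T ! b)" using Suc by simp
    moreover have "diag (T ! b) \<subseteq> diag (T ! Suc b)" using assms(1) Suc.prems
      unfolding ribbon_tableau_def by simp
    ultimately show ?thesis by blast
  qed
qed

lemma rt_sub_lam: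
  assumes "ribbon_tableau lam alpha T" "k \<le> length alpha"
  shows "diag (T ! k) \<subseteq> diag lam"
  using rt_mono[OF assms(1) assms(2) order_refl] assms(1) unfolding ribbon_tableau_def by simp

lemma rt_rib_sub:
  assumes "ribbon_tableau lam alpha T" "k < length alpha"
  shows "rib T k \<subseteq> diag lam"
  using rt_sub_lam[OF assms(1), of "Suc k"] assms(2) unfolding rib_def by auto

lemma rt_disj:
  assumes "ribbon_tableau lam alpha T" "j < length alpha" "k < length alpha" "j \<noteq> k"
  shows "rib T j \<inter> rib T k = {}"
proof -
  have *: "rib T a \<inter> rib T b = {}" if "a < b" "b < length alpha" for a b
  proof -
    have "rib T a \<subseteq> diag (T ! b)" using rt_mono[OF assms(1), of "Suc a" b] that
      unfolding rib_def by auto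
    then show ?thesis unfolding rib_def by auto
  qed
  show ?thesis
  proof (cases "j < k")
    case True then show ?thesis using * assms by blast
  next
    case False then have "k < j" using assms(4) by simp
    then show ?thesis using * assms by blast
  qed
qed

lemma rt_card:
  assumes "ribbon_tableau lam alpha T" "k < length alpha"
  shows "card (rib T k) = alpha ! k" "rib T k \<noteq> {}" "1 \<le> alpha ! k"
proof -
  show c: "card (rib T k) = alpha ! k" using assms unfolding ribbon_tableau_def rib_def by simp
  show ne: "rib T k \<noteq> {}" using assms unfolding ribbon_tableau_def rib_def ribbon_def cells_connected_def by simp
  have "finite (rib T k)" unfolding rib_def by simp
  then show "1 \<le> alpha ! k" using c ne by (metis One_nat_def Suc_leI card_gt_0_iff)
qed

lemma rt_part:
  assumes "ribbon_tableau lam alpha T" "k \<le> length alpha"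
  shows "is_partition (T ! k)"
  using assms unfolding ribbon_tableau_def by simp

lemma rt_sum:
  assumes "ribbon_tableau lam alpha T" "k < length alpha"
  shows "sum_list (T ! Suc k) = sum_list (T ! k) + alpha ! k"
proof -
  have sub: "diag (T ! k) \<subseteq> diag (T ! Suc k)" using assms unfolding ribbon_tableau_def by simp
  have "alpha ! k = card (diag (T ! Suc k)) - card (diag (T ! k))"
    using rt_card(1)[OF assms] unfolding rib_def by (simp add: card_Diff_subset[OF _ sub])
  moreover have "card (diag (T ! k)) \<le> card (diag (T ! Suc k))" using sub by (simp add: card_mono)
  ultimately show ?thesis by (simp add: card_diag)
qed

lemma rt_chg:
  assumes "ribbon_tableau lam alpha T" "k < length alpha" "tl (T ! Suc k) \<noteq> tl (T ! k)"
  shows "\<exists>c\<in>rib T k. c \<in> R1"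
proof (rule ccontr)
  assume "\<not> ?thesis"
  then have "rib T k \<inter> R1 = {}" by blast
  moreover have sub: "diag (T ! k) \<subseteq> diag (T ! Suc k)" using assms unfolding ribbon_tableau_def by simp
  ultimately have "diag (T ! Suc k) \<inter> R1 = diag (T ! k) \<inter> R1" unfolding rib_def by blast
  then have "tl (T ! Suc k) = tl (T ! k)"
    using tl_eq_of_diag[OF rt_part[OF assms(1), of "Suc k"] rt_part[OF assms(1), of k]] assms(2) by simp
  then show False using assms(3) by simp
qed

lemma rt_tl_sum:
  assumes "ribbon_tableau lam alpha T" "k \<le> length alpha"
  shows "sum_list (tl (T ! k)) \<le> sum_list (tl lam)"
proof -
  have "diag (T ! k) \<inter> R1 \<subseteq> diag lam \<inter> R1" using rt_sub_lam[OF assms] by blast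
  then have "card (diag (T ! k) \<inter> R1) \<le> card (diag lam \<inter> R1)" by (simp add: card_mono)
  then show ?thesis by (simp add: card_diag_R1)
qed

lemma rt_inj:
  assumes T: "ribbon_tableau lam alpha T" and T': "ribbon_tableau lam alpha T'"
    and ch: "\<forall>k<length alpha. (tl (T ! Suc k) \<noteq> tl (T ! k)) = (tl (T' ! Suc k) \<noteq> tl (T' ! k))"
    and v: "\<forall>k<length alpha. tl (T ! Suc k) \<noteq> tl (T ! k) \<longrightarrow> tl (T ! Suc k) = tl (T' ! Suc k)"
  shows "T = T'"
proof -
  have main: "tl (T ! k) = tl (T' ! k) \<and> sum_list (T ! k) = sum_list (T' ! k)" if "k \<le> length alpha" for k
    using that
  proof (induction k)
    case 0 then show ?case using T T' unfolding ribbon_tableau_def by simp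
  next
    case (Suc k)
    then have k: "k < length alpha" by simp
    have "tl (T ! Suc k) = tl (T' ! Suc k)"
      using Suc k ch v by (metis Suc_leD)
    moreover have "sum_list (T ! Suc k) = sum_list (T' ! Suc k)"
      using rt_sum[OF T k] rt_sum[OF T' k] Suc k by simp
    ultimately show ?case by simp
  qed
  have "T ! k = T' ! k" if "k < length T" for k
  proof -
    have kk: "k \<le> length alpha" using that T unfolding ribbon_tableau_def by simp
    show ?thesis
      using rt_part[OF T kk] rt_part[OF T' kk] main[OF kk] eq_of_tl_sum unfolding is_partition_def by blast
  qed
  moreover have "length T = length T'" using T T' unfolding ribbon_tableau_def by simp
  ultimately show ?thesis by (metis nth_equalityI)
qed


lemma finite_cycles: "finite (cycles_of \<sigma> n)"
proof -
  have "cycles_of \<sigma> n = orb \<sigma> ` {..<n}" unfolding cycles_of_def by auto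
  then show ?thesis by simp
qed

lemma card_cycles_le: "card (cycles_of \<sigma> n) \<le> n"
proof -
  have "cycles_of \<sigma> n = orb \<sigma> ` {..<n}" unfolding cycles_of_def by auto
  then show ?thesis using card_image_le[of "{..<n}" "orb \<sigma>"] by simp
qed

lemma fcyc_le: "fcyc \<sigma> n i \<le> n"
proof -
  have "card {c \<in> cycles_of \<sigma> n. card c = i} \<le> card (cycles_of \<sigma> n)"
    by (rule card_mono[OF finite_cycles]) blast
  then show ?thesis unfolding fcyc_def using card_cycles_le[of \<sigma> n] by linarith
qed

lemma filter_len_sym: "length (filter (\<lambda>y. y = i) xs) = length (filter ((=) i) xs)"
  by (induction xs) auto

lemma count_ct: "card {k. k < length (cycle_type \<sigma> n) \<and> cycle_type \<sigma> n ! k = i} = fcyc \<sigma> n i"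
proof -
  let ?C = "cycles_of \<sigma> n"
  have "card {k. k < length (cycle_type \<sigma> n) \<and> cycle_type \<sigma> n ! k = i}
      = length (filter (\<lambda>y. y = i) (cycle_type \<sigma> n))" by (simp add: length_filter_conv_card)
  also have "\<dots> = count (mset (cycle_type \<sigma> n)) i" unfolding count_mset count_list_eq_length_filter by (rule filter_len_sym)
  also have "\<dots> = count (image_mset card (mset_set ?C)) i" unfolding cycle_type_def
    by (simp only: mset_sorted_list_of_multiset)
  also have "\<dots> = (\<Sum>y\<in>card -` {i} \<inter> set_mset (mset_set ?C). count (mset_set ?C) y)"
    by (rule count_image_mset)
  also have "\<dots> = (\<Sum>y\<in>card -` {i} \<inter> ?C. 1)"
    using finite_cycles[of \<sigma> n] by (intro sum.cong) (simp_all add: count_mset_set)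
  also have "\<dots> = card (card -` {i} \<inter> ?C)" by simp
  also have "\<dots> = card {c \<in> ?C. card c = i}" by (rule arg_cong[where f=card]) blast
  finally show ?thesis unfolding fcyc_def .
qed

lemma powr_bound: "real (fcyc \<sigma> n i) powr (1 / real i) \<le> real n"
proof (cases "fcyc \<sigma> n i = 0")
  case True then show ?thesis by simp
next
  case False
  show ?thesis
  proof (cases "i = 0")
    case True then show ?thesis using fcyc_le[of \<sigma> n i] by simp
  next
    case i: False
    have "real (fcyc \<sigma> n i) powr (1 / real i) \<le> real (fcyc \<sigma> n i) powr 1"
      using False i by (intro powr_mono) auto
    also have "\<dots> \<le> real n" using fcyc_le[of \<sigma> n i] False by simp
    finally show ?thesis .
  qed
qed

lemma bddM: "bdd_above ((\<lambda>i. real (fcyc \<sigma> n i) powr (1 / real i)) ` A)"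
  using powr_bound by (intro bdd_aboveI2) blast

lemma le_G: "2 \<le> i \<Longrightarrow> real (fcyc \<sigma> n i) powr (1 / real i) \<le> Gfun \<sigma> n"
  unfolding Gfun_def by (rule cSUP_upper[OF _ bddM]) simp

lemma le_M: "1 \<le> i \<Longrightarrow> real (fcyc \<sigma> n i) powr (1 / real i) \<le> Mfun \<sigma> n"
  unfolding Mfun_def by (rule cSUP_upper[OF _ bddM]) simp

lemma G_nonneg: "0 \<le> Gfun \<sigma> n"
  using le_G[of 2 \<sigma> n] powr_ge_zero[of "real (fcyc \<sigma> n 2)" "1 / real 2"] by linarith

lemma G_le_M: "Gfun \<sigma> n \<le> Mfun \<sigma> n"
  unfolding Gfun_def Mfun_def by (rule cSUP_subset_mono) (auto intro: bddM)

lemma f_le_M: "real (fcyc \<sigma> n 1) \<le> Mfun \<sigma> n"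
  using le_M[of 1 \<sigma> n] by simp

lemma Fi_le_G: assumes "2 \<le> i" shows "real (fcyc \<sigma> n i) \<le> Gfun \<sigma> n ^ i"
proof -
  let ?x = "real (fcyc \<sigma> n i)"
  have "?x = (?x powr (1 / real i)) ^ i"
  proof (cases "?x = 0")
    case True then show ?thesis using assms by simp
  next
    case False
    then have "(?x powr (1 / real i)) ^ i = ?x powr (1 / real i * real i)"
      by (simp add: powr_realpow[symmetric] powr_powr)
    then show ?thesis using assms by simp
  qed
  also have "\<dots> \<le> Gfun \<sigma> n ^ i" using le_G[OF assms] by (intro power_mono) auto
  finally show ?thesis .
qed

lemma card_small_subsets:
  assumes "finite A" "s = 0 \<or> 1 \<le> card A"
  shows "card {Z. Z \<subseteq> A \<and> card Z \<le> s} \<le> (s + 1) * card A ^ s"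
proof -
  have e: "{Z. Z \<subseteq> A \<and> card Z \<le> s} = (\<Union>j\<in>{..s}. {Z. Z \<subseteq> A \<and> card Z = j})" by auto
  have "card {Z. Z \<subseteq> A \<and> card Z \<le> s} \<le> (\<Sum>j\<le>s. card {Z. Z \<subseteq> A \<and> card Z = j})"
    unfolding e by (rule card_UN_le) simp
  also have "\<dots> \<le> (\<Sum>j\<le>s. card A ^ s)"
  proof (rule sum_mono)
    fix j assume j: "j \<in> {..s}"
    have "card {Z. Z \<subseteq> A \<and> card Z = j} = card A choose j" using n_subsets[OF assms(1)] by simp
    also have "\<dots> \<le> card A ^ j"
      by (cases "j \<le> card A") (auto simp: binomial_le_pow binomial_eq_0)
    also have "\<dots> \<le> card A ^ s" using assms(2) j by (auto intro: power_increasing)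
    finally show "card {Z. Z \<subseteq> A \<and> card Z = j} \<le> card A ^ s" .
  qed
  finally show ?thesis by simp
qed


lemma chg_facts:
  assumes T: "ribbon_tableau lam alpha T"
    and Un: "\<Union>{rib T k | k. k < length alpha \<and> alpha ! k = 1} = diag mu"
  defines "E \<equiv> {k. k < length alpha \<and> tl (T ! Suc k) \<noteq> tl (T ! k)}"
  shows "card E \<le> card (diag lam \<inter> R1)"
    "card (E \<inter> {k. k < length alpha \<and> alpha ! k = 1}) \<le> card (diag mu \<inter> R1)"
    "\<forall>k\<in>E - {k. k < length alpha \<and> alpha ! k = 1}. 2 \<le> alpha ! k \<and> rib T k \<inter> lower_skew lam mu \<noteq> {}"
proof -
  define cc where "cc k = (SOME c. c \<in> rib T k \<and> c \<in> R1)" for k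
  have cc: "cc k \<in> rib T k \<and> cc k \<in> R1" if "k \<in> E" for k
  proof -
    have "\<exists>c. c \<in> rib T k \<and> c \<in> R1" using rt_chg[OF T] that unfolding E_def by blast
    then show ?thesis unfolding cc_def by (rule someI_ex)
  qed
  have inj: "inj_on cc E"
  proof (rule inj_onI)
    fix j k assume jk: "j \<in> E" "k \<in> E" "cc j = cc k"
    show "j = k"
    proof (rule ccontr)
      assume "j \<noteq> k"
      then have "rib T j \<inter> rib T k = {}" using rt_disj[OF T] jk(1,2) unfolding E_def by blast
      then show False using cc[OF jk(1)] cc[OF jk(2)] jk(3) by auto
    qed
  qed
  have "cc ` E \<subseteq> diag lam \<inter> R1"
  proof
    fix x assume "x \<in> cc ` E"
    then obtain k where k: "k \<in> E" "x = cc k" by blast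
    then have "k < length alpha" unfolding E_def by simp
    then show "x \<in> diag lam \<inter> R1" using cc[OF k(1)] rt_rib_sub[OF T] k(2) by blast
  qed
  then show "card E \<le> card (diag lam \<inter> R1)"
    by (rule card_inj_on_le[OF inj]) simp
  have im: "cc ` (E \<inter> {k. k < length alpha \<and> alpha ! k = 1}) \<subseteq> diag mu \<inter> R1"
  proof
    fix x assume "x \<in> cc ` (E \<inter> {k. k < length alpha \<and> alpha ! k = 1})"
    then obtain k where k: "k \<in> E" "k < length alpha" "alpha ! k = 1" "x = cc k" by blast
    have "rib T k \<subseteq> \<Union>{rib T k | k. k < length alpha \<and> alpha ! k = 1}" using k(2,3) by blast
    then have "x \<in> diag mu" using cc[OF k(1)] k(4) Un by blast
    then show "x \<in> diag mu \<inter> R1" using cc[OF k(1)] k(4) by blast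
  qed
  have fin: "finite (diag mu \<inter> R1)" by simp
  show "card (E \<inter> {k. k < length alpha \<and> alpha ! k = 1}) \<le> card (diag mu \<inter> R1)"
    by (rule card_inj_on_le[OF inj_on_subset[OF inj Int_lower1] im fin])
  show "\<forall>k\<in>E - {k. k < length alpha \<and> alpha ! k = 1}. 2 \<le> alpha ! k \<and> rib T k \<inter> lower_skew lam mu \<noteq> {}"
  proof
    fix k assume k: "k \<in> E - {k. k < length alpha \<and> alpha ! k = 1}"
    then have kE: "k \<in> E" and kp: "k < length alpha" and a1: "alpha ! k \<noteq> 1" unfolding E_def by auto
    show "2 \<le> alpha ! k \<and> rib T k \<inter> lower_skew lam mu \<noteq> {}"
    proof
      show "2 \<le> alpha ! k" using rt_card(3)[OF T kp] a1 by simp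
      have nm: "cc k \<notin> diag mu"
      proof
        assume "cc k \<in> diag mu"
        then have "cc k \<in> \<Union>{rib T k | k. k < length alpha \<and> alpha ! k = 1}" using Un by simp
        then obtain j where j: "j < length alpha" "alpha ! j = 1" "cc k \<in> rib T j" by blast
        then have "j \<noteq> k" using a1 by auto
        then have "rib T j \<inter> rib T k = {}" using rt_disj[OF T j(1) kp] by blast
        then show False using j(3) cc[OF kE] by blast
      qed
      have "cc k \<in> diag lam" using cc[OF kE] rt_rib_sub[OF T kp] by blast
      moreover have "1 \<le> fst (cc k)" using cc[OF kE] unfolding R1_def by simp
      ultimately have "cc k \<in> lower_skew lam mu"
        using nm unfolding lower_skew_def by simp
      then show "rib T k \<inter> lower_skew lam mu \<noteq> {}" using cc[OF kE] by blast
    qed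
  qed
qed


lemma suc_le_pow2: "Suc m \<le> 2 ^ m"
  by (induction m) auto

theorem lemma2p10:
  fixes r :: nat
  assumes "1 \<le> r"
  shows "\<exists>C :: real. \<forall>n lam \<sigma> mu s.
    3 * r \<le> n \<longrightarrow> partition_of lam n \<longrightarrow> n - first_row lam = r \<longrightarrow>
    \<sigma> permutes {..<n} \<longrightarrow> 2 * r \<le> fcyc \<sigma> n 1 \<longrightarrow>
    partition_of mu (fcyc \<sigma> n 1) \<longrightarrow> diag mu \<subseteq> diag lam \<longrightarrow>
    2 \<le> card (lower_skew lam mu) \<longrightarrow>
    (\<forall>i>card (lower_skew lam mu). s i = 0) \<longrightarrow>
    (\<Sum>i=2..card (lower_skew lam mu). i * s i) = card (lower_skew lam mu) \<longrightarrow>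
    real (card (S_set lam (cycle_type \<sigma> n) mu s))
      \<le> C * real (fcyc \<sigma> n 1) powi (int r - int (card (lower_skew lam mu)))
          * Gfun \<sigma> n ^ card (lower_skew lam mu)
    \<and> C * real (fcyc \<sigma> n 1) powi (int r - int (card (lower_skew lam mu)))
          * Gfun \<sigma> n ^ card (lower_skew lam mu) \<le> C * Mfun \<sigma> n ^ r"
proof -
  define Q where "Q = {xs :: nat list. set xs \<subseteq> {..r} \<and> length xs \<le> r}"
  define cQ where "cQ = card Q"
  have finQ: "finite Q" unfolding Q_def
    by (rule finite_subset[OF _ finite_lists_length_le[of "{..r}" r]]) auto
  have cQ1: "1 \<le> cQ" unfolding cQ_def
  proof -
    have "[] \<in> Q" unfolding Q_def by simp
    then show "1 \<le> card Q" using finQ by (metis One_nat_def Suc_leI card_gt_0_iff empty_iff)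
  qed
  define C where "C = real ((r + 1) * 2 ^ r * cQ ^ r)"
  show ?thesis
  proof (rule exI[of _ C], intro allI impI)
    fix n lam \<sigma> mu s
    assume n3: "3 * r \<le> n" and plam: "partition_of lam n" and fr: "n - first_row lam = r"
      and perm: "\<sigma> permutes {..<n}" and f2: "2 * r \<le> fcyc \<sigma> n 1"
      and pmu: "partition_of mu (fcyc \<sigma> n 1)" and musub: "diag mu \<subseteq> diag lam"
      and K2: "2 \<le> card (lower_skew lam mu)"
      and s0: "\<forall>i>card (lower_skew lam mu). s i = 0"
      and ssum: "(\<Sum>i=2..card (lower_skew lam mu). i * s i) = card (lower_skew lam mu)"
    define K where "K = card (lower_skew lam mu)"
    define f where "f = fcyc \<sigma> n 1"
    define G where "G = Gfun \<sigma> n"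
    define M where "M = Mfun \<sigma> n"
    define alpha where "alpha = cycle_type \<sigma> n"
    define p where "p = length alpha"
    define A where "A i = {k. k < p \<and> alpha ! k = i}" for i
    define S where "S = S_set lam alpha mu s"
    have C0: "0 \<le> C" unfolding C_def by simp
    have f1: "1 \<le> f" using f2 assms unfolding f_def by simp
    have G0: "0 \<le> G" unfolding G_def by (rule G_nonneg)
    have GM: "G \<le> M" unfolding G_def M_def by (rule G_le_M)
    have fM: "real f \<le> M" unfolding f_def M_def by (rule f_le_M)
    have cardA: "card (A i) = fcyc \<sigma> n i" for i
      unfolding A_def p_def alpha_def by (rule count_ct)
    have finA: "finite (A i)" for i unfolding A_def by simp
    have lamne: "lam \<noteq> []" using plam n3 assms unfolding partition_of_def by auto
    have r_eq: "card (diag lam \<inter> R1) = r"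
    proof -
      have "sum_list lam = n" using plam unfolding partition_of_def by simp
      then have "sum_list (tl lam) = n - first_row lam" using lamne
        by (cases lam) (auto simp: first_row_def)
      then show ?thesis using fr by (simp add: card_diag_R1)
    qed
    have ls: "lower_skew lam mu = (diag lam \<inter> R1) - (diag mu \<inter> R1)"
      unfolding lower_skew_def R1_def by auto
    have musub1: "diag mu \<inter> R1 \<subseteq> diag lam \<inter> R1" using musub by blast
    have Kr: "K = r - card (diag mu \<inter> R1)" unfolding K_def ls
      using card_Diff_subset[OF _ musub1] r_eq by simp
    have mule: "card (diag mu \<inter> R1) \<le> r" using card_mono[OF _ musub1] r_eq by simp
    have KLr: "K \<le> r" using Kr by simp
    have muK: "card (diag mu \<inter> R1) = r - K" using Kr mule by simp
    have powi_e: "int r - int K = int (r - K)" using KLr by simp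
    have powi_eq: "real f powi (int r - int K) = real f ^ (r - K)"
      by (simp only: powi_e power_int_of_nat)
    have ineq2: "C * real f powi (int r - int K) * G ^ K \<le> C * M ^ r"
    proof -
      have "real f ^ (r - K) * G ^ K \<le> M ^ (r - K) * M ^ K"
        using fM GM G0 by (intro mult_mono power_mono) auto
      also have "\<dots> = M ^ r" using KLr by (simp add: power_add[symmetric])
      finally show ?thesis using C0 powi_eq by (simp add: mult.assoc mult_left_mono)
    qed
    have rhs0: "0 \<le> C * real f powi (int r - int K) * G ^ K"
      using C0 G0 powi_eq by simp
    have ineq1: "real (card S) \<le> C * real f powi (int r - int K) * G ^ K"
    proof (cases "S = {}")
      case True then show ?thesis using rhs0 by simp
    next
      case False
      then obtain T0 where T0: "T0 \<in> S" by blast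
      define B where "B (T :: nat list list) i = {k. k < p \<and> alpha ! k = i \<and> rib T k \<inter> lower_skew lam mu \<noteq> {}}" for T i
      have BS: "card (B T i) = s i" if "T \<in> S" "2 \<le> i" for T i
        using that unfolding S_def S_set_def B_def p_def by auto
      have finB: "finite (B T i)" for T i unfolding B_def by simp
      have sA: "s i \<le> card (A i)" if "2 \<le> i" for i
      proof -
        have "B T0 i \<subseteq> A i" unfolding A_def B_def by auto
        then show ?thesis using BS[OF T0 that] card_mono[OF finA] by metis
      qed
      define U where "U = {k. k < p \<and> 2 \<le> alpha ! k \<and> alpha ! k \<le> K}"
      define X1 where "X1 = {Z. Z \<subseteq> A 1 \<and> card Z \<le> r - K}"
      define Y where "Y i = {Z. Z \<subseteq> A i \<and> card Z \<le> s i}" for i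
      define X2 where "X2 = {Z. Z \<subseteq> U \<and> (\<forall>i\<in>{2..K}. card (Z \<inter> A i) \<le> s i)}"
      define \<E> where "\<E> = {E. E \<subseteq> {..<p} \<and> card E \<le> r \<and> E \<inter> A 1 \<in> X1 \<and> E - A 1 \<in> X2}"
      define chg where "chg (T :: nat list list) = {k. k < p \<and> tl (T ! Suc k) \<noteq> tl (T ! k)}" for T
      define \<Phi> where "\<Phi> (T :: nat list list) = (chg T, restrict (\<lambda>k. tl (T ! Suc k)) (chg T))" for T
      have finU: "finite U" unfolding U_def by simp
      have finX1: "finite X1" unfolding X1_def by (rule finite_subset[of _ "Pow (A 1)"]) (auto simp: finA)
      have finX2: "finite X2" unfolding X2_def by (rule finite_subset[of _ "Pow U"]) (auto simp: finU)
      have finE: "finite \<E>" unfolding \<E>_def by (rule finite_subset[of _ "Pow {..<p}"]) auto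
      have inS: "ribbon_tableau lam alpha T \<and> \<Union>{rib T k | k. k < p \<and> alpha ! k = 1} = diag mu" if "T \<in> S" for T
        using that unfolding S_def S_set_def p_def by auto
      have map: "\<Phi> T \<in> Sigma \<E> (\<lambda>E. PiE E (\<lambda>_. Q))" if TS: "T \<in> S" for T
      proof -
        have T: "ribbon_tableau lam alpha T" and Un: "\<Union>{rib T k | k. k < length alpha \<and> alpha ! k = 1} = diag mu"
          using inS[OF TS] unfolding p_def by auto
        note cf = chg_facts[OF T Un]
        have A1eq: "{k. k < length alpha \<and> alpha ! k = 1} = A 1" unfolding A_def p_def by simp
        have ce: "{k. k < length alpha \<and> tl (T ! Suc k) \<noteq> tl (T ! k)} = chg T" unfolding chg_def p_def by simp
        have c1: "card (chg T) \<le> r" using cf(1) r_eq ce by simp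
        have c2: "chg T \<inter> A 1 \<in> X1" using cf(2) muK ce A1eq unfolding X1_def by auto
        have c3: "2 \<le> alpha ! k \<and> k \<in> B T (alpha ! k)" if "k \<in> chg T - A 1" for k
          using cf(3) that ce A1eq unfolding B_def chg_def by auto
        have c4: "alpha ! k \<le> K" if "k \<in> chg T - A 1" for k
        proof (rule ccontr)
          assume "\<not> alpha ! k \<le> K"
          then have "s (alpha ! k) = 0" using s0 unfolding K_def by simp
          then have "card (B T (alpha ! k)) = 0" using BS[OF TS] c3[OF that] by simp
          then show False using c3[OF that] finB by (metis card_0_eq empty_iff)
        qed
        have c5: "chg T - A 1 \<in> X2"
          unfolding X2_def
        proof (intro CollectI conjI ballI)
          show "chg T - A 1 \<subseteq> U" using c3 c4 unfolding U_def chg_def by auto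
          fix i assume i: "i \<in> {2..K}"
          have "(chg T - A 1) \<inter> A i \<subseteq> B T i" using c3 unfolding A_def by auto
          then show "card ((chg T - A 1) \<inter> A i) \<le> s i"
            using card_mono[OF finB] BS[OF TS] i by (metis atLeastAtMost_iff)
        qed
        have c6: "chg T \<in> \<E>" unfolding \<E>_def using c1 c2 c5 unfolding chg_def by auto
        have c7: "tl (T ! Suc k) \<in> Q" if "k \<in> chg T" for k
        proof -
          have kp: "Suc k \<le> length alpha" using that unfolding chg_def p_def by simp
          have sl: "sum_list (tl (T ! Suc k)) \<le> r"
            using rt_tl_sum[OF T kp] r_eq by (simp add: card_diag_R1)
          have pos: "\<forall>x\<in>set (tl (T ! Suc k)). 0 < x" using rt_part[OF T kp] unfolding is_partition_def
            by (metis list.sel(2) list.set_sel(2))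
          have "length (tl (T ! Suc k)) \<le> r" using length_le_sum_list[OF pos] sl by simp
          moreover have "set (tl (T ! Suc k)) \<subseteq> {..r}"
            using sl member_le_sum_list by fastforce
          ultimately show ?thesis unfolding Q_def by simp
        qed
        show ?thesis unfolding \<Phi>_def using c6 c7 by auto
      qed
      have inj: "inj_on \<Phi> S"
      proof (rule inj_onI)
        fix T T' assume TS: "T \<in> S" and T'S: "T' \<in> S" and eq: "\<Phi> T = \<Phi> T'"
        have T: "ribbon_tableau lam alpha T" and T': "ribbon_tableau lam alpha T'" using inS TS T'S by auto
        have ceq: "chg T = chg T'" using eq unfolding \<Phi>_def by simp
        have veq: "restrict (\<lambda>k. tl (T ! Suc k)) (chg T) = restrict (\<lambda>k. tl (T' ! Suc k)) (chg T)"
          using eq ceq unfolding \<Phi>_def by simp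
        show "T = T'"
        proof (rule rt_inj[OF T T'])
          show "\<forall>k<length alpha. (tl (T ! Suc k) \<noteq> tl (T ! k)) = (tl (T' ! Suc k) \<noteq> tl (T' ! k))"
            using ceq unfolding chg_def p_def by blast
          show "\<forall>k<length alpha. tl (T ! Suc k) \<noteq> tl (T ! k) \<longrightarrow> tl (T ! Suc k) = tl (T' ! Suc k)"
          proof (intro allI impI)
            fix k assume "k < length alpha" "tl (T ! Suc k) \<noteq> tl (T ! k)"
            then have "k \<in> chg T" unfolding chg_def p_def by simp
            then show "tl (T ! Suc k) = tl (T' ! Suc k)" using fun_cong[OF veq, of k] by simp
          qed
        qed
      qed
      have finSig: "finite (Sigma \<E> (\<lambda>E. PiE E (\<lambda>_. Q)))"
      proof (rule finite_SigmaI[OF finE])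
        fix E assume "E \<in> \<E>"
        then have "finite E" unfolding \<E>_def by (auto intro: finite_subset)
        then show "finite (PiE E (\<lambda>_. Q))" using finQ by (simp add: finite_PiE)
      qed
      have step1: "card S \<le> card (Sigma \<E> (\<lambda>E. PiE E (\<lambda>_. Q)))"
        using card_inj_on_le[OF inj _ finSig] map by blast
      have step2: "card (Sigma \<E> (\<lambda>E. PiE E (\<lambda>_. Q))) \<le> card \<E> * cQ ^ r"
      proof -
        have "card (Sigma \<E> (\<lambda>E. PiE E (\<lambda>_. Q))) = (\<Sum>E\<in>\<E>. card (PiE E (\<lambda>_. Q)))"
        proof (rule card_SigmaI[OF finE], intro ballI)
          fix E assume "E \<in> \<E>"
          then have "finite E" unfolding \<E>_def by (auto intro: finite_subset)
          then show "finite (PiE E (\<lambda>_. Q))" using finQ by (simp add: finite_PiE)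
        qed
        also have "\<dots> \<le> (\<Sum>E\<in>\<E>. cQ ^ r)"
        proof (rule sum_mono)
          fix E assume E: "E \<in> \<E>"
          then have "finite E" "card E \<le> r" unfolding \<E>_def by (auto intro: finite_subset)
          then have "card (PiE E (\<lambda>_. Q)) = cQ ^ card E" by (simp add: card_PiE cQ_def)
          also have "\<dots> \<le> cQ ^ r" using cQ1 \<open>card E \<le> r\<close> by (simp add: power_increasing)
          finally show "card (PiE E (\<lambda>_. Q)) \<le> cQ ^ r" .
        qed
        finally show ?thesis by simp
      qed
      have step3: "card \<E> \<le> card X1 * card X2"
      proof -
        have i1: "inj_on (\<lambda>E. (E \<inter> A 1, E - A 1)) \<E>" by (rule inj_onI) blast
        have i2: "(\<lambda>E. (E \<inter> A 1, E - A 1)) ` \<E> \<subseteq> X1 \<times> X2" unfolding \<E>_def by auto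
        have "card \<E> \<le> card (X1 \<times> X2)"
          by (rule card_inj_on_le[OF i1 i2]) (simp add: finX1 finX2)
        then show ?thesis by (simp add: card_cartesian_product)
      qed
      have step4: "card X1 \<le> (r + 1) * f ^ (r - K)"
      proof -
        have "card X1 \<le> (r - K + 1) * card (A 1) ^ (r - K)"
          unfolding X1_def using card_small_subsets[OF finA, of "r - K" 1] cardA[of 1] f1 f_def by simp
        also have "\<dots> \<le> (r + 1) * f ^ (r - K)" using cardA[of 1] f_def by simp
        finally show ?thesis .
      qed
      have step5: "card X2 \<le> (\<Prod>i\<in>{2..K}. (s i + 1) * fcyc \<sigma> n i ^ s i)"
      proof -
        define h where "h Z = restrict (\<lambda>i. Z \<inter> A i) {2..K}" for Z
        have "inj_on h X2"
        proof (rule inj_onI)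
          fix Z Z' assume Z: "Z \<in> X2" and Z': "Z' \<in> X2" and e: "h Z = h Z'"
          have ZA: "Z \<inter> A i = Z' \<inter> A i" if "i \<in> {2..K}" for i
            using fun_cong[OF e, of i] that unfolding h_def by simp
          moreover have "Z \<subseteq> U" "Z' \<subseteq> U" using Z Z' unfolding X2_def by auto
          ultimately have "\<And>k. k \<in> Z \<Longrightarrow> k \<in> Z'" "\<And>k. k \<in> Z' \<Longrightarrow> k \<in> Z"
          proof -
            fix k assume k: "k \<in> Z"
            then have "k \<in> U" using \<open>Z \<subseteq> U\<close> by blast
            then have i: "alpha ! k \<in> {2..K}" and kA: "k \<in> A (alpha ! k)" unfolding U_def A_def by auto
            have "k \<in> Z \<inter> A (alpha ! k)" using k kA by blast
            then show "k \<in> Z'" using \<open>\<And>i. i \<in> {2..K} \<Longrightarrow> Z \<inter> A i = Z' \<inter> A i\<close>[OF i] by blast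
          next
            fix k assume k: "k \<in> Z'"
            then have "k \<in> U" using \<open>Z' \<subseteq> U\<close> by blast
            then have i: "alpha ! k \<in> {2..K}" and kA: "k \<in> A (alpha ! k)" unfolding U_def A_def by auto
            have "k \<in> Z' \<inter> A (alpha ! k)" using k kA by blast
            then show "k \<in> Z" using \<open>\<And>i. i \<in> {2..K} \<Longrightarrow> Z \<inter> A i = Z' \<inter> A i\<close>[OF i] by blast
          qed
          then show "Z = Z'" by blast
        qed
        moreover have "h ` X2 \<subseteq> PiE {2..K} Y" unfolding h_def X2_def Y_def by auto
        moreover have "finite (PiE {2..K} Y)"
        proof (intro finite_PiE)
          fix i show "finite (Y i)" unfolding Y_def
            by (rule finite_subset[of _ "Pow (A i)"]) (auto simp: finA)
        qed simp
        ultimately have "card X2 \<le> card (PiE {2..K} Y)" by (rule card_inj_on_le)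
        also have "\<dots> = (\<Prod>i\<in>{2..K}. card (Y i))" by (simp add: card_PiE)
        also have "\<dots> \<le> (\<Prod>i\<in>{2..K}. (s i + 1) * fcyc \<sigma> n i ^ s i)"
        proof (rule prod_mono)
          fix i assume i: "i \<in> {2..K}"
          have "s i = 0 \<or> 1 \<le> card (A i)" using sA[of i] i by auto
          then have "card (Y i) \<le> (s i + 1) * card (A i) ^ s i"
            unfolding Y_def by (rule card_small_subsets[OF finA])
          then show "0 \<le> card (Y i) \<and> card (Y i) \<le> (s i + 1) * fcyc \<sigma> n i ^ s i"
            using cardA by simp
        qed
        finally show ?thesis .
      qed
      have step6: "real (\<Prod>i\<in>{2..K}. (s i + 1) * fcyc \<sigma> n i ^ s i) \<le> 2 ^ r * G ^ K"
      proof -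
        have "real (\<Prod>i\<in>{2..K}. (s i + 1) * fcyc \<sigma> n i ^ s i)
            = (\<Prod>i\<in>{2..K}. real (s i + 1) * real (fcyc \<sigma> n i) ^ s i)"
          by (simp only: of_nat_prod of_nat_mult of_nat_power)
        also have "\<dots> \<le> (\<Prod>i\<in>{2..K}. 2 ^ s i * G ^ (i * s i))"
        proof (rule prod_mono)
          fix i assume i: "i \<in> {2..K}"
          have a: "real (s i + 1) \<le> 2 ^ s i"
          proof -
            have "s i + 1 \<le> 2 ^ s i" using suc_le_pow2[of "s i"] by simp
            then show ?thesis by (metis numeral_power_le_of_nat_cancel_iff of_nat_le_iff of_nat_numeral of_nat_power)
          qed
          have b: "real (fcyc \<sigma> n i) ^ s i \<le> G ^ (i * s i)"
            using Fi_le_G[of i \<sigma> n] i unfolding G_def by (auto simp: power_mult intro: power_mono)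
          show "0 \<le> real (s i + 1) * real (fcyc \<sigma> n i) ^ s i \<and>
                real (s i + 1) * real (fcyc \<sigma> n i) ^ s i \<le> 2 ^ s i * G ^ (i * s i)"
            using a b by (auto intro: mult_mono)
        qed
        also have "\<dots> = 2 ^ (\<Sum>i\<in>{2..K}. s i) * G ^ (\<Sum>i\<in>{2..K}. i * s i)"
          by (simp add: prod.distrib power_sum)
        also have "\<dots> = 2 ^ (\<Sum>i\<in>{2..K}. s i) * G ^ K" using ssum unfolding K_def by simp
        also have "\<dots> \<le> 2 ^ r * G ^ K"
        proof -
          have "(\<Sum>i\<in>{2..K}. s i) \<le> (\<Sum>i\<in>{2..K}. i * s i)" by (intro sum_mono) auto
          then have "(\<Sum>i\<in>{2..K}. s i) \<le> r" using ssum KLr unfolding K_def by simp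
          then have "(2::real) ^ (\<Sum>i\<in>{2..K}. s i) \<le> 2 ^ r" by (intro power_increasing) auto
          then show ?thesis using G0 by (intro mult_right_mono) auto
        qed
        finally show ?thesis .
      qed
      have "card \<E> * cQ ^ r \<le> card X1 * card X2 * cQ ^ r" using step3 by (rule mult_le_mono1)
      then have "card S \<le> card X1 * card X2 * cQ ^ r" using step1 step2 by linarith
      then have "real (card S) \<le> real (card X1 * card X2 * cQ ^ r)" by (simp only: of_nat_le_iff)
      then have "real (card S) \<le> real (card X1) * real (card X2) * real cQ ^ r" by simp
      also have "\<dots> \<le> (real (r + 1) * real f ^ (r - K)) * (2 ^ r * G ^ K) * real cQ ^ r"
      proof (intro mult_mono)
        show "real (card X1) \<le> real (r + 1) * real f ^ (r - K)"
          using step4 by (metis of_nat_le_iff of_nat_mult of_nat_power)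
        show "real (card X2) \<le> 2 ^ r * G ^ K"
          using step5 step6 by (meson of_nat_le_iff order_trans)
      qed (use G0 in auto)
      also have "\<dots> = C * real f ^ (r - K) * G ^ K" unfolding C_def by (simp add: algebra_simps)
      finally show ?thesis using powi_eq by simp
    qed
    show "real (card (S_set lam (cycle_type \<sigma> n) mu s))
      \<le> C * real (fcyc \<sigma> n 1) powi (int r - int (card (lower_skew lam mu)))
          * Gfun \<sigma> n ^ card (lower_skew lam mu)
    \<and> C * real (fcyc \<sigma> n 1) powi (int r - int (card (lower_skew lam mu)))
          * Gfun \<sigma> n ^ card (lower_skew lam mu) \<le> C * Mfun \<sigma> n ^ r"
      using ineq1 ineq2 unfolding S_def alpha_def K_def f_def G_def M_def by simp
  qed
qed

end
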